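(* Let $H$ be obtained from a graph $G$ on vertices $v_1,\dots,v_k$ by expanding each $v_i$ by the graph $M_i=(V_i,E_i)$. Let $\Omega$ be a potential maximal clique of $H$ and let $\Omega_G=\{v_i \mid V_i\cap\Omega\neq\emptyset\}$. If $\Omega=\bigcup_{v_i\in\Omega_G}V_i$, then $\Omega_G$ is a potential maximal clique of $G$.
   Context: Expansion: given a graph $G$ on vertices $v_1,\dots,v_k$ and pairwise disjoint graphs $M_i=(V_i,E_i)$, the graph $H$ obtained by expanding each $v_i$ by $M_i$ has vertex set $V_1\cup\dots\cup V_k$ and edge set $E_1\cup\dots\cup E_k\cup\{ab \mid a\in V_i, b\in V_j, v_iv_j\in E(G)\}$. A graph is chordal if every cycle of length at least 4 has a chord; a minimal triangulation of a graph $F$ is a chordal supergraph on the same vertex set such that no proper subset of its edge set containing $E(F)$ gives a chordal graph. A potential maximal clique of $F$ is a vertex set that is a maximal clique of some minimal triangulation of $F$. *)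

theory Defs
  imports Main
begin

definition graph :: "'a set \<Rightarrow> 'a set set \<Rightarrow> bool" where
  "graph V E \<longleftrightarrow> finite V \<and> (\<forall>e\<in>E. \<exists>u v. e = {u, v} \<and> u \<noteq> v \<and> u \<in> V \<and> v \<in> V)"

definition is_cycle :: "'a set set \<Rightarrow> 'a list \<Rightarrow> bool" where
  "is_cycle E xs \<longleftrightarrow> distinct xs \<and> length xs \<ge> 3 \<and>
     (\<forall>i < length xs. {xs ! i, xs ! ((i + 1) mod length xs)} \<in> E)"

definition has_chord :: "'a set set \<Rightarrow> 'a list \<Rightarrow> bool" where
  "has_chord E xs \<longleftrightarrow> (\<exists>i j. i < length xs \<and> j < length xs \<and> i \<noteq> j \<and>
     j \<noteq> (i + 1) mod length xs \<and> i \<noteq> (j + 1) mod length xs \<and> {xs ! i, xs ! j} \<in> E)"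

definition chordal :: "'a set \<Rightarrow> 'a set set \<Rightarrow> bool" where
  "chordal V E \<longleftrightarrow> (\<forall>xs. set xs \<subseteq> V \<and> is_cycle E xs \<and> length xs \<ge> 4 \<longrightarrow> has_chord E xs)"

definition minimal_triangulation :: "'a set \<Rightarrow> 'a set set \<Rightarrow> 'a set set \<Rightarrow> bool" where
  "minimal_triangulation V E F \<longleftrightarrow> graph V F \<and> E \<subseteq> F \<and> chordal V F \<and>
     (\<forall>F'. E \<subseteq> F' \<and> F' \<subset> F \<longrightarrow> \<not> chordal V F')"

definition clique :: "'a set \<Rightarrow> 'a set set \<Rightarrow> 'a set \<Rightarrow> bool" where
  "clique V E K \<longleftrightarrow> K \<subseteq> V \<and> (\<forall>u\<in>K. \<forall>v\<in>K. u \<noteq> v \<longrightarrow> {u, v} \<in> E)"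

definition maximal_clique :: "'a set \<Rightarrow> 'a set set \<Rightarrow> 'a set \<Rightarrow> bool" where
  "maximal_clique V E K \<longleftrightarrow> clique V E K \<and> (\<forall>K'. clique V E K' \<and> K \<subseteq> K' \<longrightarrow> K' = K)"

definition potential_maximal_clique :: "'a set \<Rightarrow> 'a set set \<Rightarrow> 'a set \<Rightarrow> bool" where
  "potential_maximal_clique V E \<Omega> \<longleftrightarrow>
     (\<exists>F. minimal_triangulation V E F \<and> maximal_clique V F \<Omega>)"

definition expansion_vertices :: "'v set \<Rightarrow> ('v \<Rightarrow> 'a set) \<Rightarrow> 'a set" where
  "expansion_vertices VG M = (\<Union>v\<in>VG. M v)"

definition expansion_edges ::
  "'v set \<Rightarrow> 'v set set \<Rightarrow> ('v \<Rightarrow> 'a set) \<Rightarrow> ('v \<Rightarrow> 'a set set) \<Rightarrow> 'a set set" where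
  "expansion_edges VG EG M EM = (\<Union>v\<in>VG. EM v) \<union>
     {{a, b} | a b. \<exists>i\<in>VG. \<exists>j\<in>VG. {i, j} \<in> EG \<and> a \<in> M i \<and> b \<in> M j}"

end

theory Submission
  imports Defs
begin


lemma has_chord_iff:
  "has_chord E xs \<longleftrightarrow> (\<exists>i j. i + 1 < j \<and> j < length xs \<and> \<not>(i = 0 \<and> j = length xs - 1) \<and> {xs!i, xs!j} \<in> E)"
proof
  assume "has_chord E xs"
  then obtain i j where ij: "i < length xs" "j < length xs" "i \<noteq> j" "j \<noteq> (i + 1) mod length xs"
    "i \<noteq> (j + 1) mod length xs" "{xs ! i, xs ! j} \<in> E" unfolding has_chord_def by blast
  show "\<exists>i j. i + 1 < j \<and> j < length xs \<and> \<not>(i = 0 \<and> j = length xs - 1) \<and> {xs!i, xs!j} \<in> E"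
  proof (cases "i < j")
    case True
    have "(i+1) mod length xs = i + 1" using True ij by simp
    moreover have "j = length xs - 1 \<Longrightarrow> (j+1) mod length xs = 0" using ij by (cases "length xs") auto
    ultimately show ?thesis using True ij by (intro exI[of _ i] exI[of _ j]) auto
  next
    case False
    hence "j < i" using ij by simp
    have "(j+1) mod length xs = j + 1" using \<open>j < i\<close> ij by simp
    moreover have "i = length xs - 1 \<Longrightarrow> (i+1) mod length xs = 0" using ij by (cases "length xs") auto
    ultimately show ?thesis using \<open>j < i\<close> ij by (intro exI[of _ j] exI[of _ i]) (auto simp: insert_commute)
  qed
next
  assume "\<exists>i j. i + 1 < j \<and> j < length xs \<and> \<not>(i = 0 \<and> j = length xs - 1) \<and> {xs!i, xs!j} \<in> E"
  then obtain i j where ij: "i + 1 < j" "j < length xs" "\<not>(i = 0 \<and> j = length xs - 1)" "{xs!i, xs!j} \<in> E"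
    by blast
  have "(i+1) mod length xs = i + 1" using ij by simp
  moreover have "i \<noteq> (j + 1) mod length xs"
  proof (cases "j + 1 < length xs")
    case True thus ?thesis using ij by simp
  next
    case False
    hence jn: "j = length xs - 1" using ij by simp
    hence "(j + 1) mod length xs = 0" using ij by (cases "length xs") auto
    moreover have "i \<noteq> 0" using ij(3) jn by auto
    ultimately show ?thesis by simp
  qed
  ultimately show "has_chord E xs" unfolding has_chord_def using ij
    by (intro exI[of _ i] exI[of _ j]) auto
qed

lemma is_cycle_step:
  assumes "is_cycle E xs"
  shows "{xs ! (k mod length xs), xs ! (Suc k mod length xs)} \<in> E"
proof -
  have n: "length xs > 0" using assms unfolding is_cycle_def by auto
  have "(k mod length xs + 1) mod length xs = Suc k mod length xs"
    by (simp add: mod_Suc_eq)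
  moreover have "k mod length xs < length xs" using n by simp
  ultimately show ?thesis using assms unfolding is_cycle_def by metis
qed

lemma is_cycle_mono: "is_cycle E xs \<Longrightarrow> E \<subseteq> E' \<Longrightarrow> is_cycle E' xs"
  unfolding is_cycle_def by auto

lemma arc_chord:
  assumes "i < p" "p < j" "j < q" "q < n + i" "j < n" "n = length xs"
    "{xs!p, xs!(q mod n)} \<in> E"
  shows "has_chord E xs"
proof (cases "q < n")
  case True
  hence "q mod n = q" by simp
  thus ?thesis unfolding has_chord_iff using assms True
    by (intro exI[of _ p] exI[of _ q]) auto
next
  case False
  hence qm: "q mod n = q - n" using assms
    by (simp add: le_mod_geq)
  have "q - n < i" using assms False by linarith
  thus ?thesis unfolding has_chord_iff using assms qm
    by (intro exI[of _ "q - n"] exI[of _ p]) (auto simp: insert_commute)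
qed

lemma ivt:
  assumes "a \<le> b" "f a \<in> P" "f b \<in> Q" "P \<inter> Q = {}"
    "\<forall>k. a \<le> k \<longrightarrow> k < b \<longrightarrow> \<not>(f k \<in> P \<and> f (Suc k) \<in> Q)"
  shows "\<exists>p. a < p \<and> p < b \<and> f p \<notin> P \<and> f p \<notin> Q"
proof (rule ccontr)
  assume na: "\<not> ?thesis"
  have "\<forall>k. a \<le> k \<longrightarrow> k \<le> b \<longrightarrow> f k \<in> P"
  proof
    fix k show "a \<le> k \<longrightarrow> k \<le> b \<longrightarrow> f k \<in> P"
    proof (induction k)
      case 0 thus ?case using assms by auto
    next
      case (Suc k)
      show ?case
      proof (intro impI)
        assume h: "a \<le> Suc k" "Suc k \<le> b"
        show "f (Suc k) \<in> P"
        proof (cases "a = Suc k")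
          case True thus ?thesis using assms by simp
        next
          case False
          hence "a \<le> k" using h by simp
          hence "f k \<in> P" using Suc h by simp
          hence nq: "f (Suc k) \<notin> Q" using assms(5) h \<open>a \<le> k\<close> by auto
          show ?thesis
          proof (cases "Suc k = b")
            case True thus ?thesis using nq assms by simp
          next
            case False
            hence "a < Suc k" "Suc k < b" using h \<open>a \<le> k\<close> by auto
            thus ?thesis using na nq by blast
          qed
        qed
      qed
    qed
  qed
  hence "f b \<in> P" using assms by simp
  thus False using assms by auto
qed



fun walk :: "'a set set \<Rightarrow> 'a set \<Rightarrow> 'a list \<Rightarrow> bool" where
  "walk E S [] = False"
| "walk E S [x] = (x \<in> S)"
| "walk E S (x # y # xs) = (x \<in> S \<and> {x, y} \<in> E \<and> walk E S (y # xs))"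

lemma walk_Cons2: "walk E S (x # y # xs) \<longleftrightarrow> x \<in> S \<and> {x, y} \<in> E \<and> walk E S (y # xs)"
  by simp

lemma walk_nth:
  "walk E S xs \<longleftrightarrow> xs \<noteq> [] \<and> set xs \<subseteq> S \<and> (\<forall>i. Suc i < length xs \<longrightarrow> {xs!i, xs!Suc i} \<in> E)"
proof (induction xs)
  case Nil thus ?case by simp
next
  case (Cons x xs)
  show ?case
  proof (cases "xs = []")
    case True thus ?thesis by simp
  next
    case False
    then obtain y zs where xs: "xs = y # zs" by (cases xs) auto
    have "(\<forall>i. Suc i < length (x # xs) \<longrightarrow> {(x # xs)!i, (x # xs)!Suc i} \<in> E) \<longleftrightarrow>
          {x, y} \<in> E \<and> (\<forall>i. Suc i < length xs \<longrightarrow> {xs!i, xs!Suc i} \<in> E)"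
    proof
      assume h: "\<forall>i. Suc i < length (x # xs) \<longrightarrow> {(x # xs)!i, (x # xs)!Suc i} \<in> E"
      have "{x, y} \<in> E" using h[rule_format, of 0] xs by simp
      moreover have "\<forall>i. Suc i < length xs \<longrightarrow> {xs!i, xs!Suc i} \<in> E"
        using h by (metis Suc_less_eq length_Cons nth_Cons_Suc)
      ultimately show "{x, y} \<in> E \<and> (\<forall>i. Suc i < length xs \<longrightarrow> {xs!i, xs!Suc i} \<in> E)" by blast
    next
      assume h: "{x, y} \<in> E \<and> (\<forall>i. Suc i < length xs \<longrightarrow> {xs!i, xs!Suc i} \<in> E)"
      show "\<forall>i. Suc i < length (x # xs) \<longrightarrow> {(x # xs)!i, (x # xs)!Suc i} \<in> E"
      proof (intro allI impI)
        fix i assume i: "Suc i < length (x # xs)"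
        show "{(x # xs)!i, (x # xs)!Suc i} \<in> E"
        proof (cases i)
          case 0 thus ?thesis using h xs by simp
        next
          case (Suc k) thus ?thesis using h i by simp
        qed
      qed
    qed
    thus ?thesis using Cons.IH xs by auto
  qed
qed

lemma walk_append:
  assumes "xs \<noteq> []" "ys \<noteq> []"
  shows "walk E S (xs @ ys) \<longleftrightarrow> walk E S xs \<and> walk E S ys \<and> {last xs, hd ys} \<in> E"
  using assms
proof (induction xs)
  case Nil thus ?case by simp
next
  case (Cons x xs)
  show ?case
  proof (cases "xs = []")
    case True thus ?thesis using Cons.prems by (cases ys) auto
  next
    case False
    then obtain y zs where "xs = y # zs" by (cases xs) auto
    thus ?thesis using Cons.IH Cons.prems False by auto
  qed
qed

lemma walk_join:
  assumes "walk E S (xs @ [x])" "walk E S (x # ys)"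
  shows "walk E S (xs @ x # ys)"
proof (cases "xs = []")
  case True thus ?thesis using assms by simp
next
  case False
  have "walk E S xs \<and> walk E S [x] \<and> {last xs, x} \<in> E"
    using assms(1) walk_append[OF False, of "[x]"] by simp
  thus ?thesis using walk_append[OF False, of "x # ys"] assms(2) by simp
qed

lemma walk_set: "walk E S xs \<Longrightarrow> set xs \<subseteq> S"
  by (simp add: walk_nth)

lemma walk_mono: "walk E S xs \<Longrightarrow> set xs \<subseteq> S' \<Longrightarrow> walk E S' xs"
  by (simp add: walk_nth)

lemma shortest_walk:
  assumes "walk E S xs" "hd xs = a" "last xs = b"
  shows "\<exists>ys. walk E S ys \<and> hd ys = a \<and> last ys = b \<and> distinct ys \<and>
            (\<forall>i j. i + 1 < j \<and> j < length ys \<longrightarrow> {ys!i, ys!j} \<notin> E)"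
proof -
  let ?P = "\<lambda>ys. walk E S ys \<and> hd ys = a \<and> last ys = b"
  obtain ys where ys: "?P ys" and mn: "\<And>zs. ?P zs \<Longrightarrow> length ys \<le> length zs"
    using ex_has_least_nat[of ?P xs length] assms by blast
  have ne: "ys \<noteq> []" using ys by auto
  have d: "distinct ys"
  proof (rule ccontr)
    assume "\<not> distinct ys"
    then obtain us x vs ws where dec: "ys = us @ [x] @ vs @ [x] @ ws"
      using not_distinct_decomp by blast
    let ?zs = "us @ x # ws"
    have w1: "walk E S (us @ [x])"
      using ys dec walk_append[of "us @ [x]" "vs @ [x] @ ws" E S] by auto
    have w2: "walk E S (x # ws)"
      using ys dec walk_append[of "us @ [x] @ vs" "x # ws" E S] by auto
    have "walk E S ?zs" using walk_join[OF w1 w2] .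
    moreover have "hd ?zs = a" using ys dec by (cases us) auto
    moreover have "last ?zs = b" using ys dec by (cases ws) auto
    ultimately have "length ys \<le> length ?zs" using mn by blast
    thus False using dec by simp
  qed
  have c: "\<forall>i j. i + 1 < j \<and> j < length ys \<longrightarrow> {ys!i, ys!j} \<notin> E"
  proof (intro allI impI notI)
    fix i j assume ij: "i + 1 < j \<and> j < length ys" and e: "{ys!i, ys!j} \<in> E"
    let ?zs = "take (Suc i) ys @ drop j ys"
    have sp1: "ys = take (Suc i) ys @ drop (Suc i) ys" by simp
    have sp2: "ys = take j ys @ drop j ys" by simp
    have t1: "take (Suc i) ys \<noteq> []" using ij ne by simp
    have t2: "drop (Suc i) ys \<noteq> []" using ij by simp
    have t3: "take j ys \<noteq> []" using ij by auto
    have t4: "drop j ys \<noteq> []" using ij by simp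
    have w1: "walk E S (take (Suc i) ys)"
      using ys walk_append[OF t1 t2, of E S] sp1 by metis
    have w2: "walk E S (drop j ys)"
      using ys walk_append[OF t3 t4, of E S] sp2 by metis
    have l1: "last (take (Suc i) ys) = ys ! i" using ij
      by (simp add: take_Suc_conv_app_nth)
    have h2: "hd (drop j ys) = ys ! j" using ij by (simp add: hd_drop_conv_nth)
    have "walk E S ?zs" using walk_append[OF t1 t4, of E S] w1 w2 l1 h2 e by simp
    moreover have "hd ?zs = a" using ys t1 by (simp add: hd_append)
    moreover have "last ?zs = b" using ys t4 by simp
    ultimately have "length ys \<le> length ?zs" using mn by blast
    thus False using ij by (simp; linarith)
  qed
  show ?thesis using ys d c by blast
qed



lemma walk_endpoints:
  assumes "walk E S p" "hd p = u" "last p = v" "distinct p"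
  shows "p ! 0 = u" "p ! (length p - 1) = v" "length p > 0"
    "\<And>k. 0 < k \<Longrightarrow> k < length p - 1 \<Longrightarrow> p ! k \<in> S - {u, v}"
proof -
  have ne: "p \<noteq> []" using walk_nth[THEN iffD1, OF assms(1)] by blast
  show p0: "p ! 0 = u" using ne assms by (simp add: hd_conv_nth)
  show pl: "p ! (length p - 1) = v" using ne assms by (simp add: last_conv_nth)
  show "length p > 0" using ne by simp
  fix k assume k: "0 < k" "k < length p - 1"
  have kl: "k < length p" "0 < length p" using k by auto
  have "p ! k \<in> set p" using k by simp
  hence "p ! k \<in> S" using walk_set[OF assms(1)] by blast
  moreover have "p ! k \<noteq> u" using p0 k assms(4) nth_eq_iff_index_eq[OF assms(4) kl(1) kl(2)] by auto
  moreover have "p ! k \<noteq> v" using pl k assms(4) nth_eq_iff_index_eq[OF assms(4) kl(1), of "length p - 1"] by auto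
  ultimately show "p ! k \<in> S - {u, v}" by blast
qed

lemma two_paths:
  assumes ch: "chordal V E"
    and uv: "u \<noteq> v" "{u, v} \<notin> E"
    and AB: "A \<inter> B = {}" "u \<notin> A" "u \<notin> B" "v \<notin> A" "v \<notin> B"
    and ne: "\<forall>a\<in>A. \<forall>b\<in>B. {a, b} \<notin> E"
    and V: "A \<subseteq> V" "B \<subseteq> V" "u \<in> V" "v \<in> V"
    and w1: "walk E (A \<union> {u, v}) xs" "hd xs = u" "last xs = v"
    and w2: "walk E (B \<union> {u, v}) ys" "hd ys = v" "last ys = u"
  shows False
proof -
  obtain p where p: "walk E (A \<union> {u, v}) p" "hd p = u" "last p = v" "distinct p"
    "\<forall>i j. i + 1 < j \<and> j < length p \<longrightarrow> {p!i, p!j} \<notin> E"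
    using shortest_walk[OF w1] by blast
  obtain q where q: "walk E (B \<union> {u, v}) q" "hd q = v" "last q = u" "distinct q"
    "\<forall>i j. i + 1 < j \<and> j < length q \<longrightarrow> {q!i, q!j} \<notin> E"
    using shortest_walk[OF w2] by blast
  note pe = walk_endpoints[OF p(1-4)]
  note qe = walk_endpoints[OF q(1-4)]
  have pE: "\<And>i. Suc i < length p \<Longrightarrow> {p!i, p!Suc i} \<in> E" using walk_nth[THEN iffD1, OF p(1)] by blast
  have qE: "\<And>i. Suc i < length q \<Longrightarrow> {q!i, q!Suc i} \<in> E" using walk_nth[THEN iffD1, OF q(1)] by blast
  define m where "m = length p"
  define r where "r = length q"
  have m3: "m \<ge> 3"
  proof (rule ccontr)
    assume "\<not> m \<ge> 3"
    moreover have "m > 0" using pe(3) m_def by simp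
    ultimately have "m = 1 \<or> m = 2" by arith
    thus False
    proof
      assume "m = 1" thus False using pe uv m_def by auto
    next
      assume "m = 2" thus False using pe uv pE[of 0] m_def by auto
    qed
  qed
  have r3: "r \<ge> 3"
  proof (rule ccontr)
    assume "\<not> r \<ge> 3"
    moreover have "r > 0" using qe(3) r_def by simp
    ultimately have "r = 1 \<or> r = 2" by arith
    thus False
    proof
      assume "r = 1" thus False using qe uv r_def by auto
    next
      assume "r = 2" thus False using qe uv qE[of 0] r_def by (auto simp: insert_commute)
    qed
  qed
  define c where "c = butlast p @ butlast q"
  define n where "n = length c"
  have n_eq: "n = (m - 1) + (r - 1)" unfolding n_def c_def m_def r_def by simp
  have cnth: "\<And>k. k < n \<Longrightarrow> c ! k = (if k < m - 1 then p ! k else q ! (k - (m - 1)))"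
  proof -
    fix k assume k: "k < n"
    show "c ! k = (if k < m - 1 then p ! k else q ! (k - (m - 1)))"
      unfolding c_def using k n_eq m_def r_def by (auto simp: nth_append nth_butlast)
  qed
  have pA: "\<And>k. 0 < k \<Longrightarrow> k < m - 1 \<Longrightarrow> p ! k \<in> A" using pe(4) m_def by blast
  have qB: "\<And>k. 0 < k \<Longrightarrow> k < r - 1 \<Longrightarrow> q ! k \<in> B" using qe(4) r_def by blast
  have p0: "p ! 0 = u" and pl: "p ! (m - 1) = v" using pe m_def by auto
  have q0: "q ! 0 = v" and ql: "q ! (r - 1) = u" using qe r_def by auto
  have cq: "\<And>k. m - 1 \<le> k \<Longrightarrow> k < n \<Longrightarrow> c ! k = q ! (k - (m - 1))" using cnth by auto
  have cp: "\<And>k. k \<le> m - 1 \<Longrightarrow> c ! k = p ! k"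
  proof -
    fix k assume k: "k \<le> m - 1"
    show "c ! k = p ! k"
    proof (cases "k < m - 1")
      case True thus ?thesis using cnth n_eq r3 by auto
    next
      case False
      hence "k = m - 1" using k by simp
      thus ?thesis using cq[of k] n_eq r3 q0 pl by auto
    qed
  qed
  have setp: "set (butlast p) \<subseteq> A \<union> {u}"
  proof
    fix x assume "x \<in> set (butlast p)"
    then obtain k where k: "k < m - 1" "x = p ! k"
      by (auto simp: in_set_conv_nth nth_butlast m_def)
    thus "x \<in> A \<union> {u}" using pA p0 by (cases "k = 0") auto
  qed
  have setq: "set (butlast q) \<subseteq> B \<union> {v}"
  proof
    fix x assume "x \<in> set (butlast q)"
    then obtain k where k: "k < r - 1" "x = q ! k"
      by (auto simp: in_set_conv_nth nth_butlast r_def)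
    thus "x \<in> B \<union> {v}" using qB q0 by (cases "k = 0") auto
  qed
  have dc: "distinct c"
  proof -
    have "distinct (butlast p)" "distinct (butlast q)" using p(4) q(4) by (auto simp: distinct_butlast)
    moreover have "set (butlast p) \<inter> set (butlast q) = {}" using setp setq AB uv by blast
    ultimately show ?thesis unfolding c_def by simp
  qed
  have cyc: "is_cycle E c"
    unfolding is_cycle_def
  proof (intro conjI allI impI)
    show "distinct c" by (rule dc)
    show "3 \<le> length c" using n_def n_eq m3 r3 by simp
    fix i assume i: "i < length c"
    show "{c ! i, c ! ((i + 1) mod length c)} \<in> E"
    proof (cases "i + 1 < n")
      case True
      hence md: "(i + 1) mod length c = i + 1" using n_def by simp
      show ?thesis
      proof (cases "i + 1 \<le> m - 1")
        case True
        hence "c ! i = p ! i" "c ! (i + 1) = p ! (i + 1)" using cp by auto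
        moreover have "Suc i < length p" using True m_def m3 by simp
        ultimately show ?thesis using md pE[of i] by simp
      next
        case False
        hence mi: "m - 1 \<le> i" by simp
        moreover have "Suc (i - (m - 1)) < length q" using \<open>i + 1 < n\<close> n_eq r_def mi by linarith
        ultimately show ?thesis using md cq[of i] cq[of "i+1"] qE[of "i - (m - 1)"] \<open>i + 1 < n\<close>
          by (simp add: Suc_diff_le)
      qed
    next
      case False
      hence iN: "i = n - 1" using i n_def by simp
      hence "i + 1 = length c" using n_def i by simp
      hence md: "(i + 1) mod length c = 0" by simp
      have "c ! 0 = u" using cp[of 0] p0 by simp
      moreover have "c ! i = q ! (r - 2)" using cq[of i] iN n_eq m3 r3 by simp
      moreover have "{q ! (r - 2), q ! Suc (r - 2)} \<in> E" using qE[of "r - 2"] r3 r_def by simp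
      moreover have "Suc (r - 2) = r - 1" using r3 by simp
      ultimately show ?thesis using md ql by simp
    qed
  qed
  have cV: "set c \<subseteq> V" using setp setq V unfolding c_def by auto
  have "has_chord E c" using ch cyc cV n_def n_eq m3 r3 unfolding chordal_def by auto
  then obtain i j where ij: "i + 1 < j" "j < n" "\<not> (i = 0 \<and> j = n - 1)" "{c ! i, c ! j} \<in> E"
    unfolding has_chord_iff n_def by blast
  show False
  proof (cases "j \<le> m - 1")
    case True
    moreover have "i \<le> m - 1" using True ij by simp
    ultimately have "c ! i = p ! i" "c ! j = p ! j" using cp by auto
    moreover have "j < length p" using True m_def m3 by simp
    ultimately show False using ij p(5)[rule_format, of i j] by simp
  next
    case jm: False
    show False
    proof (cases "m - 1 \<le> i")
      case True
      have "i - (m - 1) + 1 < j - (m - 1)" "j - (m - 1) < length q" using True ij n_eq r_def by auto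
      moreover have "c ! i = q ! (i - (m - 1))" "c ! j = q ! (j - (m - 1))" using cq True ij by auto
      ultimately show False using ij q(5)[rule_format, of "i - (m - 1)" "j - (m - 1)"] by simp
    next
      case False
      show False
      proof (cases "i = 0")
        case True
        have "c ! i = q ! (r - 1)" using True cp[of 0] p0 ql by simp
        moreover have "c ! j = q ! (j - (m - 1))" using cq[of j] jm ij by simp
        moreover have "j - (m - 1) + 1 < r - 1" using ij True n_eq jm m3 r3 by auto
        moreover have "r - 1 < length q" using r_def r3 by simp
        ultimately show False using ij(4) q(5)[rule_format, of "j - (m - 1)" "r - 1"] by (simp add: insert_commute)
      next
        case False
        have "c ! i \<in> A" using cp[of i] pA[of i] False \<open>\<not> m - 1 \<le> i\<close> by simp
        moreover have "c ! j \<in> B" using cq[of j] qB[of "j - (m - 1)"] jm ij n_eq by simp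
        ultimately show False using ne ij(4) by blast
      qed
    qed
  qed
qed



definition rel :: "'a set set \<Rightarrow> 'a set \<Rightarrow> ('a \<times> 'a) set" where
  "rel E S = {(x, y). x \<in> S \<and> y \<in> S \<and> {x, y} \<in> E}"

definition cmp :: "'a set set \<Rightarrow> 'a set \<Rightarrow> 'a \<Rightarrow> 'a set" where
  "cmp E S x = {y. (x, y) \<in> (rel E S)\<^sup>*}"

definition nbh :: "'a set \<Rightarrow> 'a set set \<Rightarrow> 'a set \<Rightarrow> 'a set" where
  "nbh V E C = {x \<in> V. x \<notin> C \<and> (\<exists>c\<in>C. {c, x} \<in> E)}"

lemma rel_conv: "(rel E S)\<inverse> = rel E S"
  unfolding rel_def by (auto simp: insert_commute)

lemma reach_sym: "(x, y) \<in> (rel E S)\<^sup>* \<Longrightarrow> (y, x) \<in> (rel E S)\<^sup>*"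
  by (metis rel_conv rtrancl_converseI)

lemma reach_in: "(x, y) \<in> (rel E S)\<^sup>* \<Longrightarrow> x \<in> S \<Longrightarrow> y \<in> S"
  by (induction rule: rtrancl_induct) (auto simp: rel_def)

lemma reach_walk:
  "(x, y) \<in> (rel E S)\<^sup>* \<Longrightarrow> x \<in> S \<Longrightarrow> \<exists>xs. walk E S xs \<and> hd xs = x \<and> last xs = y"
proof (induction rule: rtrancl_induct)
  case base thus ?case by (intro exI[of _ "[x]"]) simp
next
  case (step y z)
  then obtain xs where xs: "walk E S xs" "hd xs = x" "last xs = y" by blast
  have ne: "xs \<noteq> []" using xs walk_nth by blast
  have "walk E S (xs @ [z])" using walk_append[OF ne, of "[z]" E S] xs step(2)
    by (simp add: rel_def)
  thus ?case using xs ne by (intro exI[of _ "xs @ [z]"]) simp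
qed

lemma reach_closed:
  "(x, y) \<in> (rel E S)\<^sup>* \<Longrightarrow> x \<in> A \<Longrightarrow> (\<And>w w'. w \<in> A \<Longrightarrow> w' \<in> S \<Longrightarrow> {w, w'} \<in> E \<Longrightarrow> w' \<in> A) \<Longrightarrow> y \<in> A"
  by (induction rule: rtrancl_induct) (auto simp: rel_def)

lemma comp_sub: "x \<in> S \<Longrightarrow> cmp E S x \<subseteq> S"
  unfolding cmp_def using reach_in by fast

lemma comp_self: "x \<in> cmp E S x"
  unfolding cmp_def by simp

lemma comp_eq: "z \<in> cmp E S x \<Longrightarrow> cmp E S z = cmp E S x"
  unfolding cmp_def using reach_sym rtrancl_trans by fast

lemma comp_step: "z \<in> cmp E S x \<Longrightarrow> w \<in> S \<Longrightarrow> z \<in> S \<Longrightarrow> {z, w} \<in> E \<Longrightarrow> w \<in> cmp E S x"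
  unfolding cmp_def rel_def by (auto intro: rtrancl_into_rtrancl)

lemma comp_conn: "a \<in> cmp E S x \<Longrightarrow> b \<in> cmp E S x \<Longrightarrow> (a, b) \<in> (rel E S)\<^sup>*"
  unfolding cmp_def using reach_sym rtrancl_trans by fast

lemma graph_edge: "graph V F \<Longrightarrow> {a, b} \<in> F \<Longrightarrow> a \<in> V \<and> b \<in> V \<and> a \<noteq> b"
  unfolding graph_def by (metis doubleton_eq_iff)

lemma glue:
  assumes mt: "minimal_triangulation V E F" and CV: "C \<subseteq> V"
    and cl: "\<forall>x\<in>nbh V E C. \<forall>y\<in>nbh V E C. x \<noteq> y \<longrightarrow> {x, y} \<in> F"
    and c: "c \<in> C" and e: "{c, y} \<in> F"
  shows "y \<in> C \<union> nbh V E C"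
proof -
  define X where "X = nbh V E C"
  define F' where "F' = {e \<in> F. \<forall>c y. e = {c, y} \<and> c \<in> C \<longrightarrow> y \<in> C \<union> X}"
  have gF: "graph V F" and EF: "E \<subseteq> F" and chF: "chordal V F"
    and minF: "\<forall>F'. E \<subseteq> F' \<and> F' \<subset> F \<longrightarrow> \<not> chordal V F'"
    using mt unfolding minimal_triangulation_def by auto
  have XC: "X \<inter> C = {}" unfolding X_def nbh_def by auto
  have F'F: "F' \<subseteq> F" unfolding F'_def by auto
  have stepF': "\<And>a b. {a, b} \<in> F' \<Longrightarrow> a \<in> C \<Longrightarrow> b \<in> C \<union> X"
    unfolding F'_def by blast
  have EF': "E \<subseteq> F'"
  proof
    fix e assume eE: "e \<in> E"
    have "\<forall>c y. e = {c, y} \<and> c \<in> C \<longrightarrow> y \<in> C \<union> X"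
    proof (intro allI impI)
      fix c' y' assume h: "e = {c', y'} \<and> c' \<in> C"
      have "y' \<in> V" using graph_edge[OF gF, of c' y'] h eE EF by auto
      thus "y' \<in> C \<union> X" using h eE unfolding X_def nbh_def by auto
    qed
    thus "e \<in> F'" using eE EF unfolding F'_def by auto
  qed
  have chF': "chordal V F'"
    unfolding chordal_def
  proof (intro allI impI)
    fix xs assume h: "set xs \<subseteq> V \<and> is_cycle F' xs \<and> 4 \<le> length xs"
    define n where "n = length xs"
    have cyc: "is_cycle F' xs" using h by simp
    have dxs: "distinct xs" using cyc unfolding is_cycle_def by simp
    have "has_chord F xs" using chF h is_cycle_mono[OF _ F'F] unfolding chordal_def by blast
    then obtain i j where ij: "i + 1 < j" "j < n" "\<not> (i = 0 \<and> j = n - 1)" "{xs ! i, xs ! j} \<in> F"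
      unfolding has_chord_iff n_def by blast
    show "has_chord F' xs"
    proof (cases "{xs ! i, xs ! j} \<in> F'")
      case True thus ?thesis unfolding has_chord_iff using ij n_def by blast
    next
      case False
      then obtain c' y' where cy: "{xs ! i, xs ! j} = {c', y'}" "c' \<in> C" "y' \<notin> C \<union> X"
        using ij(4) unfolding F'_def by blast
      define Y where "Y = - (C \<union> X)"
      define f where "f = (\<lambda>k. xs ! (k mod n))"
      have fk: "\<And>k. k < n \<Longrightarrow> f k = xs ! k" unfolding f_def by simp
      have fni: "f (n + i) = xs ! i" unfolding f_def using ij by simp
      have fstep: "\<And>k. {f k, f (Suc k)} \<in> F'" unfolding f_def n_def using is_cycle_step[OF cyc] .
      have CY: "C \<inter> Y = {}" "Y \<inter> C = {}" unfolding Y_def by auto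
      have s1: "\<forall>k. i \<le> k \<longrightarrow> k < j \<longrightarrow> \<not>(f k \<in> C \<and> f (Suc k) \<in> Y)"
        using stepF' fstep unfolding Y_def by blast
      have s2: "\<forall>k. i \<le> k \<longrightarrow> k < j \<longrightarrow> \<not>(f k \<in> Y \<and> f (Suc k) \<in> C)"
        using stepF' fstep unfolding Y_def by (metis ComplD insert_commute)
      have s3: "\<forall>k. j \<le> k \<longrightarrow> k < n + i \<longrightarrow> \<not>(f k \<in> C \<and> f (Suc k) \<in> Y)"
        using stepF' fstep unfolding Y_def by blast
      have s4: "\<forall>k. j \<le> k \<longrightarrow> k < n + i \<longrightarrow> \<not>(f k \<in> Y \<and> f (Suc k) \<in> C)"
        using stepF' fstep unfolding Y_def by (metis ComplD insert_commute)
      have ends: "(f i \<in> C \<and> f j \<in> Y) \<or> (f i \<in> Y \<and> f j \<in> C)"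
        using cy fk[of i] fk[of j] ij unfolding Y_def by (auto simp: doubleton_eq_iff)
      have "\<exists>p q. i < p \<and> p < j \<and> j < q \<and> q < n + i \<and> f p \<in> X \<and> f q \<in> X"
      proof -
        have VV: "\<And>k. f k \<in> V" unfolding f_def using h n_def ij
          by (metis less_nat_zero_code mod_less_divisor neq0_conv nth_mem subsetD)
        have inX: "\<And>k. f k \<notin> C \<Longrightarrow> f k \<notin> Y \<Longrightarrow> f k \<in> X" unfolding Y_def by auto
        from ends show ?thesis
        proof
          assume a: "f i \<in> C \<and> f j \<in> Y"
          obtain p where "i < p" "p < j" "f p \<notin> C" "f p \<notin> Y"
            using ivt[of i j f C Y] a CY s1 ij by auto
          moreover obtain q where "j < q" "q < n + i" "f q \<notin> Y" "f q \<notin> C"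
            using ivt[of j "n + i" f Y C] a CY s4 ij fni fk[of i] by auto
          ultimately show ?thesis using inX by blast
        next
          assume a: "f i \<in> Y \<and> f j \<in> C"
          obtain p where "i < p" "p < j" "f p \<notin> C" "f p \<notin> Y"
            using ivt[of i j f Y C] a CY s2 ij by auto
          moreover obtain q where "j < q" "q < n + i" "f q \<notin> Y" "f q \<notin> C"
            using ivt[of j "n + i" f C Y] a CY s3 ij fni fk[of i] by auto
          ultimately show ?thesis using inX by blast
        qed
      qed
      then obtain p q where pq: "i < p" "p < j" "j < q" "q < n + i" "f p \<in> X" "f q \<in> X" by blast
      have qn: "q mod n \<noteq> p" "q mod n < n"
      proof -
        show "q mod n < n" using ij by simp
        show "q mod n \<noteq> p"
        proof (cases "q < n")
          case True thus ?thesis using pq by simp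
        next
          case False
          moreover have "q - n < n" using pq ij by linarith
          ultimately have "q mod n = q - n" by (simp add: le_mod_geq)
          thus ?thesis using pq False by linarith
        qed
      qed
      have "xs ! p \<noteq> xs ! (q mod n)"
        using dxs qn pq ij n_def nth_eq_iff_index_eq[of xs p "q mod n"] by auto
      moreover have "xs ! p \<in> X" "xs ! (q mod n) \<in> X" using pq fk ij f_def by auto
      ultimately have eF: "{xs ! p, xs ! (q mod n)} \<in> F" using cl X_def by blast
      have "{xs ! p, xs ! (q mod n)} \<in> F'"
        unfolding F'_def using eF \<open>xs ! p \<in> X\<close> \<open>xs ! (q mod n) \<in> X\<close> XC
        by (auto simp: doubleton_eq_iff)
      thus ?thesis using arc_chord[of i p j q n xs F'] pq ij n_def by simp
    qed
  qed
  have "F' = F" using minF EF' chF' F'F by blast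
  thus ?thesis using e c stepF' X_def by blast
qed



lemma dom:
  assumes ch: "chordal V F" and fK: "finite K" and KV: "K \<subseteq> V"
    and Kc: "\<forall>x\<in>K. \<forall>y\<in>K. x \<noteq> y \<longrightarrow> {x, y} \<in> F"
    and CV: "C \<subseteq> V" and CK: "C \<inter> K = {}" and c0: "c0 \<in> C"
    and conn: "\<forall>x\<in>C. \<forall>y\<in>C. (x, y) \<in> (rel F C)\<^sup>*"
    and nb: "\<forall>k\<in>K. \<exists>c\<in>C. {c, k} \<in> F"
  shows "\<exists>c\<in>C. \<forall>k\<in>K. {c, k} \<in> F"
  using fK KV Kc CK nb
proof (induction K rule: finite_induct)
  case empty thus ?case using c0 by blast
next
  case (insert w K)
  have "\<exists>c\<in>C. \<forall>k\<in>K. {c, k} \<in> F" using insert by blast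
  then obtain c1 where c1: "c1 \<in> C" "\<forall>k\<in>K. {c1, k} \<in> F" by blast
  obtain c2 where c2: "c2 \<in> C" "{c2, w} \<in> F" using insert.prems by blast
  have wC: "w \<notin> C" using insert.prems by blast
  show ?case
  proof (cases "{c1, w} \<in> F")
    case True thus ?thesis using c1 by blast
  next
    case False
    obtain ps where ps: "walk F C ps" "hd ps = c1" "last ps = c2"
      using reach_walk[of c1 c2 F C] conn c1 c2 by blast
    have psne: "ps \<noteq> []" using ps walk_nth by blast
    have psC: "\<And>i. i < length ps \<Longrightarrow> ps ! i \<in> C" using walk_set[OF ps(1)] by auto
    have psE: "\<And>i. Suc i < length ps \<Longrightarrow> {ps ! i, ps ! Suc i} \<in> F"
      using walk_nth[THEN iffD1, OF ps(1)] by blast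
    have ps0: "ps ! 0 = c1" using ps psne by (simp add: hd_conv_nth)
    have ex: "\<exists>i. i < length ps \<and> {ps ! i, w} \<in> F"
      using ps psne c2 by (intro exI[of _ "length ps - 1"]) (simp add: last_conv_nth)
    define m where "m = (LEAST i. i < length ps \<and> {ps ! i, w} \<in> F)"
    have mp: "m < length ps" "{ps ! m, w} \<in> F"
      using LeastI_ex[OF ex] unfolding m_def by auto
    have mmin: "\<And>i. i < m \<Longrightarrow> {ps ! i, w} \<notin> F"
      using not_less_Least[of _ "\<lambda>i. i < length ps \<and> {ps ! i, w} \<in> F"] mp(1) unfolding m_def
      by (meson less_trans)
    have allK: "\<forall>k\<in>K. {ps ! m, k} \<in> F"
    proof
      fix k assume kK: "k \<in> K"
      show "{ps ! m, k} \<in> F"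
      proof (rule ccontr)
        assume nmk: "{ps ! m, k} \<notin> F"
        define J where "J = {i. i \<le> m \<and> {ps ! i, k} \<in> F}"
        have fJ: "finite J" unfolding J_def by simp
        have J0: "0 \<in> J" unfolding J_def using ps0 c1 kK by simp
        define j where "j = Max J"
        have jJ: "j \<in> J" using fJ J0 unfolding j_def by (intro Max_in) auto
        have jm: "j < m" using jJ nmk unfolding J_def by (cases "j = m") auto
        have jk: "{ps ! j, k} \<in> F" using jJ unfolding J_def by simp
        have jmax: "\<And>i. j < i \<Longrightarrow> i \<le> m \<Longrightarrow> {ps ! i, k} \<notin> F"
        proof
          fix i assume "j < i" "i \<le> m" "{ps ! i, k} \<in> F"
          hence "i \<in> J" unfolding J_def by simp
          hence "i \<le> j" using fJ unfolding j_def by simp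
          thus False using \<open>j < i\<close> by simp
        qed
        define B where "B = {ps ! i | i. j < i \<and> i \<le> m}"
        have kC: "k \<notin> C" using insert.prems kK by blast
        have wK: "w \<noteq> k" using insert.hyps kK by blast
        have BC: "B \<subseteq> C" unfolding B_def using psC mp by auto
        have vB: "ps ! j \<notin> B"
        proof
          assume "ps ! j \<in> B"
          then obtain i where "j < i" "i \<le> m" "ps ! j = ps ! i" unfolding B_def by blast
          thus False using jmax jk by metis
        qed
        define ys where "ys = map (\<lambda>t. ps ! t) [j..<Suc m] @ [w]"
        have wmap: "walk F (B \<union> {w, ps ! j}) (map (\<lambda>t. ps ! t) [j..<Suc m])"
          unfolding walk_nth
        proof (intro conjI allI impI)
          show "map (\<lambda>t. ps ! t) [j..<Suc m] \<noteq> []" using jm by simp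
          show "set (map (\<lambda>t. ps ! t) [j..<Suc m]) \<subseteq> B \<union> {w, ps ! j}"
          proof
            fix x assume "x \<in> set (map (\<lambda>t. ps ! t) [j..<Suc m])"
            then obtain t where "j \<le> t" "t \<le> m" "x = ps ! t" by auto
            thus "x \<in> B \<union> {w, ps ! j}" unfolding B_def by (cases "t = j") auto
          qed
          fix t assume t: "Suc t < length (map (\<lambda>t. ps ! t) [j..<Suc m])"
          hence t1: "Suc t < Suc m - j" by (simp del: upt_Suc)
          hence "Suc (j + t) < length ps" using mp jm by simp
          moreover have "map (\<lambda>t. ps ! t) [j..<Suc m] ! t = ps ! (j + t)"
            using t1 by (simp add: nth_map_upt del: upt_Suc)
          moreover have "map (\<lambda>t. ps ! t) [j..<Suc m] ! Suc t = ps ! Suc (j + t)"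
            using t1 by (simp add: nth_map_upt del: upt_Suc)
          ultimately show "{map (\<lambda>t. ps ! t) [j..<Suc m] ! t, map (\<lambda>t. ps ! t) [j..<Suc m] ! Suc t} \<in> F"
            using psE[of "j + t"] by simp
        qed
        have lastmap: "last (map (\<lambda>t. ps ! t) [j..<Suc m]) = ps ! m"
          using jm by (simp add: last_map)
        have wys: "walk F (B \<union> {w, ps ! j}) ys" unfolding ys_def
          using walk_append[of "map (\<lambda>t. ps ! t) [j..<Suc m]" "[w]" F "B \<union> {w, ps ! j}"] wmap
            lastmap mp(2) jm by simp
        have hys: "hd ys = ps ! j" unfolding ys_def using jm by (simp add: upt_conv_Cons)
        have lys: "last ys = w" unfolding ys_def by simp
        have wxs: "walk F ({k} \<union> {w, ps ! j}) [w, k, ps ! j]"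
          using insert.prems(2) kK wK jk by (auto simp: insert_commute)
        show False
        proof (rule two_paths[OF ch, of w "ps ! j" "{k}" B "[w, k, ps ! j]" ys])
          show "w \<noteq> ps ! j" using wC psC jm mp by (metis less_trans)
          show "{w, ps ! j} \<notin> F" using mmin[OF jm] by (simp add: insert_commute)
          show "{k} \<inter> B = {}" using kC BC by blast
          show "w \<notin> {k}" using wK by simp
          show "w \<notin> B" using wC BC by blast
          show "ps ! j \<notin> {k}" using kC psC jm mp by (metis less_trans singletonD)
          show "ps ! j \<notin> B" by (rule vB)
          show "\<forall>a\<in>{k}. \<forall>b\<in>B. {a, b} \<notin> F" unfolding B_def using jmax by (auto simp: insert_commute)
          show "{k} \<subseteq> V" using insert.prems kK by auto
          show "B \<subseteq> V" using BC CV by auto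
          show "w \<in> V" using insert.prems by auto
          show "ps ! j \<in> V" using psC CV jm mp by (meson less_trans subsetD)
          show "walk F ({k} \<union> {w, ps ! j}) [w, k, ps ! j]" by (rule wxs)
          show "hd [w, k, ps ! j] = w" by simp
          show "last [w, k, ps ! j] = ps ! j" by simp
          show "walk F (B \<union> {w, ps ! j}) ys" by (rule wys)
          show "hd ys = ps ! j" by (rule hys)
          show "last ys = w" by (rule lys)
        qed
      qed
    qed
    show ?thesis using allK mp psC by (intro bexI[of _ "ps ! m"]) auto
  qed
qed



lemma walk_mono2: "walk E S xs \<Longrightarrow> E \<subseteq> E' \<Longrightarrow> S \<subseteq> S' \<Longrightarrow> walk E' S' xs"
  unfolding walk_nth by blast

lemma walk_wrap:
  assumes "walk E S ws" "u \<in> S" "v \<in> S" "{u, hd ws} \<in> E" "{last ws, v} \<in> E"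
  shows "walk E S (u # ws @ [v])"
proof -
  have ne: "ws \<noteq> []" using assms(1) walk_nth by blast
  have "walk E S (ws @ [v])" using walk_append[OF ne, of "[v]"] assms by simp
  moreover have "walk E S ([u] @ (ws @ [v]))"
    using walk_append[of "[u]" "ws @ [v]" E S] calculation assms ne by simp
  thus ?thesis by simp
qed

lemma comp_conn_in:
  assumes "a \<in> cmp E S x" "b \<in> cmp E S x"
  shows "(a, b) \<in> (rel E (cmp E S x))\<^sup>*"
proof -
  have root: "\<And>y. (x, y) \<in> (rel E S)\<^sup>* \<Longrightarrow> (x, y) \<in> (rel E (cmp E S x))\<^sup>*"
  proof -
    fix y assume "(x, y) \<in> (rel E S)\<^sup>*"
    thus "(x, y) \<in> (rel E (cmp E S x))\<^sup>*"
    proof (induction rule: rtrancl_induct)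
      case base thus ?case by simp
    next
      case (step y z)
      have "y \<in> cmp E S x" "z \<in> cmp E S x" using step unfolding cmp_def
        by (auto intro: rtrancl_into_rtrancl)
      hence yz: "(y, z) \<in> rel E (cmp E S x)" using step(2) unfolding rel_def by auto
      show ?case using step(3) yz by (rule rtrancl_into_rtrancl)
    qed
  qed
  have "(x, a) \<in> (rel E (cmp E S x))\<^sup>*" "(x, b) \<in> (rel E (cmp E S x))\<^sup>*"
    using assms root unfolding cmp_def by auto
  thus ?thesis using reach_sym rtrancl_trans by fast
qed

lemma rel_mono: "S \<subseteq> S' \<Longrightarrow> (rel E S)\<^sup>* \<subseteq> (rel E S')\<^sup>*"
  by (rule rtrancl_mono) (auto simp: rel_def)

lemma exists_min_tri:
  assumes g: "graph V E"
  shows "\<exists>T. minimal_triangulation V E T"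
proof -
  define K where "K = {{x, y} | x y. x \<in> V \<and> y \<in> V \<and> x \<noteq> y}"
  have fV: "finite V" using g unfolding graph_def by simp
  have fK: "finite K"
  proof -
    have "K \<subseteq> Pow V" unfolding K_def by auto
    thus ?thesis using fV finite_subset by blast
  qed
  have EK: "E \<subseteq> K" using g unfolding graph_def K_def by blast
  have chK: "chordal V K"
    unfolding chordal_def
  proof (intro allI impI)
    fix xs assume h: "set xs \<subseteq> V \<and> is_cycle K xs \<and> 4 \<le> length xs"
    have d: "distinct xs" using h unfolding is_cycle_def by simp
    have l: "0 < length xs" "2 < length xs" using h by auto
    have "xs ! 0 \<noteq> xs ! 2" using nth_eq_iff_index_eq[OF d l] by simp
    moreover have "xs ! 0 \<in> V" "xs ! 2 \<in> V" using h l nth_mem by blast+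
    ultimately have "{xs ! 0, xs ! 2} \<in> K" unfolding K_def by blast
    thus "has_chord K xs" unfolding has_chord_iff using h
      by (intro exI[of _ 0] exI[of _ 2]) auto
  qed
  let ?P = "\<lambda>T. E \<subseteq> T \<and> T \<subseteq> K \<and> chordal V T"
  obtain T where T: "?P T" and mn: "\<And>T'. ?P T' \<Longrightarrow> card T \<le> card T'"
    using ex_has_least_nat[of ?P K card] EK chK by blast
  have fT: "finite T" using T fK finite_subset by blast
  have "graph V T" using T fV unfolding graph_def K_def by blast
  moreover have "\<forall>F'. E \<subseteq> F' \<and> F' \<subset> T \<longrightarrow> \<not> chordal V F'"
  proof (intro allI impI notI)
    fix F' assume a: "E \<subseteq> F' \<and> F' \<subset> T" and c: "chordal V F'"
    have "card F' < card T" using a fT psubset_card_mono by blast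
    moreover have "card T \<le> card F'" using mn a c T by blast
    ultimately show False by simp
  qed
  ultimately show ?thesis unfolding minimal_triangulation_def using T by blast
qed

locale exps =
  fixes VG :: "'v set" and EG :: "'v set set"
    and M :: "'v \<Rightarrow> 'a set" and EM :: "'v \<Rightarrow> 'a set set" and \<Omega> :: "'a set"
  assumes gG: "graph VG EG"
    and gM: "\<And>v. v \<in> VG \<Longrightarrow> graph (M v) (EM v)"
    and Mne: "\<And>v. v \<in> VG \<Longrightarrow> M v \<noteq> {}"
    and Mdisj: "\<And>v w. v \<in> VG \<Longrightarrow> w \<in> VG \<Longrightarrow> v \<noteq> w \<Longrightarrow> M v \<inter> M w = {}"
    and Om: "\<Omega> = (\<Union>v\<in>{v \<in> VG. M v \<inter> \<Omega> \<noteq> {}}. M v)"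
begin

abbreviation "VH \<equiv> expansion_vertices VG M"
abbreviation "EH \<equiv> expansion_edges VG EG M EM"

definition W where "W = {v \<in> VG. M v \<inter> \<Omega> \<noteq> {}}"
definition e where "e v = (SOME x. x \<in> M v)"
definition pr where "pr x = (THE v. v \<in> VG \<and> x \<in> M v)"

lemma VH_iff: "x \<in> VH \<longleftrightarrow> (\<exists>v\<in>VG. x \<in> M v)"
  unfolding expansion_vertices_def by blast

lemma finVH: "finite VH"
proof -
  have "finite VG" using gG unfolding graph_def by simp
  moreover have "\<And>v. v \<in> VG \<Longrightarrow> finite (M v)" using gM unfolding graph_def by simp
  ultimately show ?thesis unfolding expansion_vertices_def by simp
qed

lemma e_in: "v \<in> VG \<Longrightarrow> e v \<in> M v"
  unfolding e_def using Mne by (simp add: some_in_eq)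

lemma pr_unique: "v \<in> VG \<Longrightarrow> x \<in> M v \<Longrightarrow> pr x = v"
  unfolding pr_def using Mdisj by (intro the_equality) blast+

lemma pr_in: "x \<in> VH \<Longrightarrow> pr x \<in> VG \<and> x \<in> M (pr x)"
  using VH_iff pr_unique by metis

lemma W_sub: "W \<subseteq> VG" unfolding W_def by auto

lemma Om_W: "\<Omega> = (\<Union>v\<in>W. M v)" using Om unfolding W_def .

lemma Om_VH: "\<Omega> \<subseteq> VH" using Om_W W_sub VH_iff by blast

lemma M_W: "v \<in> W \<Longrightarrow> M v \<subseteq> \<Omega>" using Om_W by blast

lemma M_notW: "v \<in> VG \<Longrightarrow> v \<notin> W \<Longrightarrow> M v \<inter> \<Omega> = {}" unfolding W_def by blast

lemma Om_iff: "x \<in> VH \<Longrightarrow> x \<in> \<Omega> \<longleftrightarrow> pr x \<in> W"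
  using pr_in M_W M_notW by blast

lemma EG_EH: "{p, q} \<in> EG \<Longrightarrow> x \<in> M p \<Longrightarrow> y \<in> M q \<Longrightarrow> {x, y} \<in> EH"
proof -
  assume a: "{p, q} \<in> EG" "x \<in> M p" "y \<in> M q"
  have "p \<in> VG" "q \<in> VG" using graph_edge[OF gG a(1)] by auto
  thus ?thesis unfolding expansion_edges_def using a by blast
qed

lemma EH_EG:
  assumes "{x, y} \<in> EH" "x \<in> M p" "y \<in> M q" "p \<in> VG" "q \<in> VG" "p \<noteq> q"
  shows "{p, q} \<in> EG"
proof -
  have xy: "x \<noteq> y" using assms Mdisj by blast
  from assms(1) show ?thesis unfolding expansion_edges_def
  proof
    assume "{x, y} \<in> (\<Union>v\<in>VG. EM v)"
    then obtain w where w: "w \<in> VG" "{x, y} \<in> EM w" by blast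
    hence "x \<in> M w" "y \<in> M w" using graph_edge[OF gM[OF w(1)] w(2)] by auto
    hence "p = w" "q = w" using assms Mdisj w(1) by blast+
    thus ?thesis using assms by simp
  next
    assume "{x, y} \<in> {{a, b} | a b. \<exists>i\<in>VG. \<exists>j\<in>VG. {i, j} \<in> EG \<and> a \<in> M i \<and> b \<in> M j}"
    then obtain a b i j where h: "{x, y} = {a, b}" "i \<in> VG" "j \<in> VG" "{i, j} \<in> EG" "a \<in> M i" "b \<in> M j"
      by blast
    show ?thesis
    proof (cases "x = a")
      case True
      hence "y = b" using h(1) xy by (auto simp: doubleton_eq_iff)
      hence "p = i" "q = j" using True h assms Mdisj by blast+
      thus ?thesis using h by simp
    next
      case False
      hence "x = b" "y = a" using h(1) by (auto simp: doubleton_eq_iff)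
      hence "p = j" "q = i" using h assms Mdisj by blast+
      thus ?thesis using h by (simp add: insert_commute)
    qed
  qed
qed

end



locale exF = exps VG EG M EM \<Omega>
  for VG :: "'v set" and EG :: "'v set set"
    and M :: "'v \<Rightarrow> 'a set" and EM :: "'v \<Rightarrow> 'a set set" and \<Omega> :: "'a set" +
  fixes F :: "'a set set"
  assumes mtF: "minimal_triangulation VH EH F" and mcF: "maximal_clique VH F \<Omega>"
begin

lemma gF: "graph VH F" and EHF: "EH \<subseteq> F" and chF: "chordal VH F"
  and minF: "\<forall>F'. EH \<subseteq> F' \<and> F' \<subset> F \<longrightarrow> \<not> chordal VH F'"
  using mtF unfolding minimal_triangulation_def by auto

lemma Om_cl: "\<forall>x\<in>\<Omega>. \<forall>y\<in>\<Omega>. x \<noteq> y \<longrightarrow> {x, y} \<in> F"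
  using mcF unfolding maximal_clique_def clique_def by blast

lemma A1G:
  assumes z: "z \<in> VG - W"
  shows "\<not> W \<subseteq> nbh VG EG (cmp EG (VG - W) z)"
proof
  assume WN: "W \<subseteq> nbh VG EG (cmp EG (VG - W) z)"
  define A where "A = cmp EG (VG - W) z"
  have AS: "A \<subseteq> VG - W" unfolding A_def by (rule comp_sub[OF z])
  have zA: "z \<in> A" unfolding A_def by (rule comp_self)
  define C where "C = e ` A"
  have CV: "C \<subseteq> VH"
  proof
    fix c assume "c \<in> C"
    then obtain a' where a': "a' \<in> A" "c = e a'" unfolding C_def by blast
    have "a' \<in> VG" using a'(1) AS by blast
    thus "c \<in> VH" using a'(2) e_in VH_iff by blast
  qed
  have CO: "C \<inter> \<Omega> = {}"
  proof (rule ccontr)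
    assume "C \<inter> \<Omega> \<noteq> {}"
    then obtain c where c: "c \<in> C" "c \<in> \<Omega>" by blast
    then obtain a' where a': "a' \<in> A" "c = e a'" unfolding C_def by blast
    have "a' \<in> VG" "a' \<notin> W" using a'(1) AS by auto
    hence "M a' \<inter> \<Omega> = {}" "e a' \<in> M a'" using M_notW e_in by auto
    thus False using c a' by blast
  qed
  have root: "\<And>y. (z, y) \<in> (rel EG (VG - W))\<^sup>* \<Longrightarrow> (e z, e y) \<in> (rel F C)\<^sup>*"
  proof -
    fix y assume "(z, y) \<in> (rel EG (VG - W))\<^sup>*"
    thus "(e z, e y) \<in> (rel F C)\<^sup>*"
    proof (induction rule: rtrancl_induct)
      case base thus ?case by simp
    next
      case (step y y')
      have yA: "y \<in> A" "y' \<in> A" unfolding A_def cmp_def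
        using step(1) rtrancl_into_rtrancl[OF step(1) step(2)] by simp_all
      have ed: "{y, y'} \<in> EG" "y \<in> VG" "y' \<in> VG" using step(2) unfolding rel_def by auto
      have "{e y, e y'} \<in> EH" using EG_EH[OF ed(1) e_in[OF ed(2)] e_in[OF ed(3)]] .
      hence "(e y, e y') \<in> rel F C" using EHF yA unfolding rel_def C_def by auto
      thus ?case using step(3) by (meson rtrancl_into_rtrancl)
    qed
  qed
  have conn: "\<forall>x\<in>C. \<forall>y\<in>C. (x, y) \<in> (rel F C)\<^sup>*"
  proof (intro ballI)
    fix x y assume "x \<in> C" "y \<in> C"
    then obtain a b where ab: "a \<in> A" "b \<in> A" "x = e a" "y = e b" unfolding C_def by blast
    have "(z, a) \<in> (rel EG (VG - W))\<^sup>*" "(z, b) \<in> (rel EG (VG - W))\<^sup>*"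
      using ab(1,2) unfolding A_def cmp_def by simp_all
    hence "(e z, x) \<in> (rel F C)\<^sup>*" "(e z, y) \<in> (rel F C)\<^sup>*"
      using root ab(3,4) by simp_all
    thus "(x, y) \<in> (rel F C)\<^sup>*" using reach_sym rtrancl_trans by fast
  qed
  have nb: "\<forall>k\<in>\<Omega>. \<exists>c\<in>C. {c, k} \<in> F"
  proof
    fix k assume kO: "k \<in> \<Omega>"
    have kV: "k \<in> VH" using kO Om_VH by blast
    have pk: "pr k \<in> W" using Om_iff[OF kV] kO by simp
    then obtain a where a: "a \<in> A" "{a, pr k} \<in> EG" using WN unfolding A_def nbh_def by blast
    have "a \<in> VG" using a AS by blast
    hence "{e a, k} \<in> EH" using EG_EH[OF a(2) e_in pr_in[OF kV, THEN conjunct2]] by blast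
    thus "\<exists>c\<in>C. {c, k} \<in> F" using EHF a(1) unfolding C_def by blast
  qed
  have fO: "finite \<Omega>" using finVH Om_VH finite_subset by blast
  have ezC: "e z \<in> C" unfolding C_def using zA by (rule imageI)
  obtain c where c: "c \<in> C" "\<forall>k\<in>\<Omega>. {c, k} \<in> F"
    using dom[OF chF fO Om_VH Om_cl CV CO ezC conn nb] by blast
  have cO: "c \<notin> \<Omega>" using c(1) CO by blast
  have cV: "c \<in> VH" using c(1) CV by blast
  have "clique VH F (insert c \<Omega>)"
    unfolding clique_def
  proof (intro conjI ballI impI)
    show "insert c \<Omega> \<subseteq> VH" using cV Om_VH by simp
    fix u w assume u: "u \<in> insert c \<Omega>" and w: "w \<in> insert c \<Omega>" and uw: "u \<noteq> w"
    show "{u, w} \<in> F"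
    proof (cases "u = c")
      case True
      hence "w \<in> \<Omega>" using w uw by simp
      thus ?thesis using True c(2) by simp
    next
      case False
      hence uO: "u \<in> \<Omega>" using u by simp
      show ?thesis
      proof (cases "w = c")
        case True
        have "{c, u} \<in> F" using uO c(2) by blast
        thus ?thesis using True by (metis insert_commute)
      next
        case False
        hence "w \<in> \<Omega>" using w by simp
        thus ?thesis using uO uw Om_cl by blast
      qed
    qed
  qed
  moreover have "\<forall>K'. clique VH F K' \<and> \<Omega> \<subseteq> K' \<longrightarrow> K' = \<Omega>"
    using mcF unfolding maximal_clique_def by simp
  ultimately have "insert c \<Omega> = \<Omega>" by blast
  thus False using cO by blast
qed

lemma glueH:
  assumes x: "x \<in> VH - \<Omega>" and e: "{x, z} \<in> F"
  shows "z \<in> cmp EH (VH - \<Omega>) x \<union> nbh VH EH (cmp EH (VH - \<Omega>) x)"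
    and "nbh VH EH (cmp EH (VH - \<Omega>) x) \<subseteq> \<Omega>"
    and "cmp EH (VH - \<Omega>) x \<subseteq> VH - \<Omega>"
proof -
  let ?C = "cmp EH (VH - \<Omega>) x"
  show CS: "?C \<subseteq> VH - \<Omega>" using comp_sub[OF x] .
  show NO: "nbh VH EH ?C \<subseteq> \<Omega>"
  proof
    fix y assume y: "y \<in> nbh VH EH ?C"
    then obtain c where c: "c \<in> ?C" "{c, y} \<in> EH" "y \<in> VH" "y \<notin> ?C" unfolding nbh_def by blast
    show "y \<in> \<Omega>"
    proof (rule ccontr)
      assume "y \<notin> \<Omega>"
      hence yS: "y \<in> VH - \<Omega>" using c(3) by simp
      have "c \<in> VH - \<Omega>" using c(1) CS by blast
      hence "y \<in> ?C" using comp_step[OF c(1) yS _ c(2)] by simp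
      thus False using c(4) by simp
    qed
  qed
  have CV: "?C \<subseteq> VH" using CS by blast
  have cl: "\<forall>u\<in>nbh VH EH ?C. \<forall>w\<in>nbh VH EH ?C. u \<noteq> w \<longrightarrow> {u, w} \<in> F"
    using NO Om_cl by (meson subsetD)
  show "z \<in> ?C \<union> nbh VH EH ?C" by (rule glue[OF mtF CV cl comp_self e])
qed

lemma gA: "x \<in> VH - \<Omega> \<Longrightarrow> {x, z} \<in> F \<Longrightarrow> z \<notin> \<Omega> \<Longrightarrow> z \<in> cmp EH (VH - \<Omega>) x"
proof -
  assume a: "x \<in> VH - \<Omega>" "{x, z} \<in> F" "z \<notin> \<Omega>"
  have "z \<notin> nbh VH EH (cmp EH (VH - \<Omega>) x)" using glueH(2)[OF a(1,2)] a(3) by blast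
  thus ?thesis using glueH(1)[OF a(1,2)] by blast
qed

lemma gB: "x \<in> VH - \<Omega> \<Longrightarrow> {x, z} \<in> F \<Longrightarrow> z \<in> \<Omega> \<Longrightarrow> z \<in> nbh VH EH (cmp EH (VH - \<Omega>) x)"
proof -
  assume a: "x \<in> VH - \<Omega>" "{x, z} \<in> F" "z \<in> \<Omega>"
  have "z \<notin> cmp EH (VH - \<Omega>) x" using glueH(3)[OF a(1,2)] a(3) by blast
  thus ?thesis using glueH(1)[OF a(1,2)] by blast
qed

lemma A2H:
  assumes ab: "a \<in> \<Omega>" "b \<in> \<Omega>" "a \<noteq> b" "{a, b} \<notin> EH"
  shows "\<exists>x\<in>VH - \<Omega>. a \<in> nbh VH EH (cmp EH (VH - \<Omega>) x) \<and> b \<in> nbh VH EH (cmp EH (VH - \<Omega>) x)"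
proof (rule ccontr)
  assume H: "\<not> ?thesis"
  define F' where "F' = F - {{a, b}}"
  have abF: "{a, b} \<in> F" using Om_cl ab by blast
  have EF': "EH \<subseteq> F'"
  proof
    fix d assume d: "d \<in> EH"
    hence "d \<noteq> {a, b}" using ab(4) by auto
    thus "d \<in> F'" using d EHF unfolding F'_def by auto
  qed
  have F'F: "F' \<subset> F" using abF unfolding F'_def by auto
  have chF': "chordal VH F'"
    unfolding chordal_def
  proof (intro allI impI)
    fix xs assume h: "set xs \<subseteq> VH \<and> is_cycle F' xs \<and> 4 \<le> length xs"
    define n where "n = length xs"
    have cyc: "is_cycle F' xs" using h by simp
    have dxs: "distinct xs" using cyc unfolding is_cycle_def by simp
    have F'sub: "F' \<subseteq> F" unfolding F'_def by auto
    have cycF: "is_cycle F xs" using is_cycle_mono[OF cyc F'sub] .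
    have "has_chord F xs" using chF h cycF unfolding chordal_def by blast
    then obtain i j where ij: "i + 1 < j" "j < n" "\<not> (i = 0 \<and> j = n - 1)" "{xs ! i, xs ! j} \<in> F"
      unfolding has_chord_iff n_def by blast
    show "has_chord F' xs"
    proof (cases "{xs ! i, xs ! j} \<in> F'")
      case True thus ?thesis unfolding has_chord_iff using ij n_def by blast
    next
      case False
      hence eab: "{xs ! i, xs ! j} = {a, b}" using ij(4) unfolding F'_def by simp
      define f where "f = (\<lambda>k. xs ! (k mod n))"
      have fk: "\<And>k. k < n \<Longrightarrow> f k = xs ! k" unfolding f_def by simp
      have fni: "f (n + i) = xs ! i" unfolding f_def using ij by simp
      have fstep: "\<And>k. {f k, f (Suc k)} \<in> F" unfolding f_def n_def
        using is_cycle_step[OF cyc] F'sub by blast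
      have VV: "\<And>k. f k \<in> VH" unfolding f_def using h n_def ij
        by (metis less_nat_zero_code mod_less_divisor neq0_conv nth_mem subsetD)
      have arc: "\<And>s t. s + 1 < t \<Longrightarrow> {f s, f t} = {a, b} \<Longrightarrow> \<exists>p. s < p \<and> p < t \<and> f p \<in> \<Omega>"
      proof (rule ccontr)
        fix s t assume st: "s + 1 < t" "{f s, f t} = {a, b}" and na: "\<nexists>p. s < p \<and> p < t \<and> f p \<in> \<Omega>"
        define x where "x = f (Suc s)"
        have xV: "x \<in> VH - \<Omega>" unfolding x_def using VV na st by auto
        have inC: "\<And>k. Suc s \<le> k \<Longrightarrow> k < t \<Longrightarrow> f k \<in> cmp EH (VH - \<Omega>) x"
        proof -
          fix k assume "Suc s \<le> k" "k < t"
          thus "f k \<in> cmp EH (VH - \<Omega>) x"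
          proof (induction k rule: dec_induct)
            case base show ?case unfolding x_def by (rule comp_self)
          next
            case (step k)
            have fkV: "f k \<in> VH - \<Omega>" using VV na step by auto
            have "f (Suc k) \<notin> \<Omega>" using na step by auto
            hence "f (Suc k) \<in> cmp EH (VH - \<Omega>) (f k)" using gA[OF fkV fstep] by blast
            moreover have "f k \<in> cmp EH (VH - \<Omega>) x" using step by simp
            ultimately show ?case using comp_eq[of "f k" EH "VH - \<Omega>" x] by simp
          qed
        qed
        have abO: "f s \<in> \<Omega>" "f t \<in> \<Omega>" using st(2) ab by (auto simp: doubleton_eq_iff)
        have "f s \<in> nbh VH EH (cmp EH (VH - \<Omega>) x)"
          using gB[OF xV _ abO(1)] fstep[of s] unfolding x_def by (simp add: insert_commute)
        moreover have "f t \<in> nbh VH EH (cmp EH (VH - \<Omega>) x)"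
        proof -
          have t1: "f (t - 1) \<in> cmp EH (VH - \<Omega>) x" using inC st by simp
          have t1V: "f (t - 1) \<in> VH - \<Omega>" using VV na st by auto
          have "{f (t - 1), f t} \<in> F" using fstep[of "t - 1"] st by simp
          hence "f t \<in> nbh VH EH (cmp EH (VH - \<Omega>) (f (t - 1)))" using gB[OF t1V _ abO(2)] by blast
          thus ?thesis using comp_eq[OF t1] by simp
        qed
        ultimately have "a \<in> nbh VH EH (cmp EH (VH - \<Omega>) x) \<and> b \<in> nbh VH EH (cmp EH (VH - \<Omega>) x)"
          using st(2) by (auto simp: doubleton_eq_iff)
        thus False using H xV by blast
      qed
      have e1: "{f i, f j} = {a, b}" using fk[of i] fk[of j] eab ij by simp
      obtain p where p: "i < p" "p < j" "f p \<in> \<Omega>"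
        using arc[of i j, OF ij(1) e1] by blast
      have jn: "j + 1 < n + i" using ij by (cases "i = 0") auto
      have e2: "{f j, f (n + i)} = {a, b}" using fk[of j] fni eab ij by (simp add: insert_commute)
      obtain q where q: "j < q" "q < n + i" "f q \<in> \<Omega>"
        using arc[of j "n + i", OF jn e2] by blast
      have qn: "q mod n \<noteq> p" "q mod n < n" "q mod n \<noteq> i" "q mod n \<noteq> j"
      proof -
        show "q mod n < n" using ij by simp
        have "q mod n \<noteq> p \<and> q mod n \<noteq> i \<and> q mod n \<noteq> j"
        proof (cases "q < n")
          case True thus ?thesis using p q ij by simp
        next
          case False
          moreover have "q - n < n" using q ij by linarith
          ultimately have "q mod n = q - n" by (simp add: le_mod_geq)
          thus ?thesis using p q False ij by linarith
        qed
        thus "q mod n \<noteq> p" "q mod n \<noteq> i" "q mod n \<noteq> j" by auto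
      qed
      have pn: "p < n" using p ij by simp
      have pnl: "p < length xs" and qnl: "q mod n < length xs" and il: "i < length xs" and jl: "j < length xs"
        using pn qn(2) ij n_def by auto
      have xp: "xs ! p \<noteq> xs ! (q mod n)"
        using nth_eq_iff_index_eq[OF dxs pnl qnl] qn(1) by simp
      have xpO: "xs ! p \<in> \<Omega>" "xs ! (q mod n) \<in> \<Omega>" using p(3) q(3) fk[OF pn] unfolding f_def by auto
      have eF: "{xs ! p, xs ! (q mod n)} \<in> F" using Om_cl xp xpO by blast
      have "xs ! p \<noteq> xs ! i" using nth_eq_iff_index_eq[OF dxs pnl il] p ij by simp
      moreover have "xs ! p \<noteq> xs ! j" using nth_eq_iff_index_eq[OF dxs pnl jl] p ij by simp
      ultimately
      have "xs ! p \<notin> {a, b}" unfolding eab[symmetric] by simp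
      hence "{xs ! p, xs ! (q mod n)} \<in> F'" using eF unfolding F'_def by auto
      thus ?thesis using arc_chord[of i p j q n xs F'] p q ij n_def by simp
    qed
  qed
  show False using minF EF' F'F chF' by blast
qed

lemma pr_reach:
  assumes "(x, y) \<in> (rel EH (VH - \<Omega>))\<^sup>*" "x \<in> VH - \<Omega>"
  shows "(pr x, pr y) \<in> (rel EG (VG - W))\<^sup>*"
  using assms
proof (induction rule: rtrancl_induct)
  case base thus ?case by simp
next
  case (step y z)
  have yz: "y \<in> VH - \<Omega>" "z \<in> VH - \<Omega>" "{y, z} \<in> EH" using step(2) unfolding rel_def by auto
  have py: "pr y \<in> VG - W" "y \<in> M (pr y)" using pr_in Om_iff yz by blast+
  have pz: "pr z \<in> VG - W" "z \<in> M (pr z)" using pr_in Om_iff yz by blast+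
  show ?case
  proof (cases "pr y = pr z")
    case True thus ?thesis using step by simp
  next
    case False
    hence "{pr y, pr z} \<in> EG" using EH_EG[OF yz(3) py(2) pz(2)] py pz by blast
    hence "(pr y, pr z) \<in> rel EG (VG - W)" using py pz unfolding rel_def by auto
    thus ?thesis using step by (meson rtrancl_into_rtrancl)
  qed
qed

lemma A2G:
  assumes uv: "u \<in> W" "v \<in> W" "u \<noteq> v" "{u, v} \<notin> EG"
  shows "\<exists>z\<in>VG - W. u \<in> nbh VG EG (cmp EG (VG - W) z) \<and> v \<in> nbh VG EG (cmp EG (VG - W) z)"
proof -
  have uvG: "u \<in> VG" "v \<in> VG" using uv W_sub by auto
  define a where "a = e u"
  define b where "b = e v"
  have am: "a \<in> M u" "b \<in> M v" unfolding a_def b_def using e_in uvG by auto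
  have aO: "a \<in> \<Omega>" "b \<in> \<Omega>" using am M_W uv by auto
  have "a \<noteq> b" using am Mdisj uvG uv by blast
  moreover have "{a, b} \<notin> EH" using EH_EG[OF _ am uvG uv(3)] uv(4) by blast
  ultimately obtain x where x: "x \<in> VH - \<Omega>" "a \<in> nbh VH EH (cmp EH (VH - \<Omega>) x)"
      "b \<in> nbh VH EH (cmp EH (VH - \<Omega>) x)"
    using A2H aO by blast
  define z where "z = pr x"
  have zG: "z \<in> VG - W" unfolding z_def using x pr_in Om_iff by blast
  define A where "A = cmp EG (VG - W) z"
  have AS: "A \<subseteq> VG - W" unfolding A_def by (rule comp_sub[OF zG])
  have prC: "\<And>c. c \<in> cmp EH (VH - \<Omega>) x \<Longrightarrow> pr c \<in> A"
    unfolding A_def cmp_def z_def using pr_reach x(1) by blast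
  have CS: "cmp EH (VH - \<Omega>) x \<subseteq> VH - \<Omega>" by (rule comp_sub[OF x(1)])
  have key: "\<And>w y. w \<in> W \<Longrightarrow> y \<in> M w \<Longrightarrow> y \<in> nbh VH EH (cmp EH (VH - \<Omega>) x) \<Longrightarrow> w \<in> nbh VG EG A"
  proof -
    fix w y assume w: "w \<in> W" "y \<in> M w" "y \<in> nbh VH EH (cmp EH (VH - \<Omega>) x)"
    then obtain c where c: "c \<in> cmp EH (VH - \<Omega>) x" "{c, y} \<in> EH" unfolding nbh_def by blast
    have cV: "c \<in> VH - \<Omega>" using c CS by blast
    have pc: "pr c \<in> VG - W" "c \<in> M (pr c)" using pr_in Om_iff cV by blast+
    have "pr c \<noteq> w" using pc w by blast
    hence "{pr c, w} \<in> EG" using EH_EG[OF c(2) pc(2) w(2)] pc W_sub w by blast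
    moreover have "w \<notin> A" using AS w by blast
    ultimately show "w \<in> nbh VG EG A" unfolding nbh_def using prC[OF c(1)] w W_sub by blast
  qed
  show ?thesis using key[OF uv(1) am(1) x(2)] key[OF uv(2) am(2) x(3)] zG A_def by blast
qed

end



context exF
begin

definition GW where "GW = EG \<union> {{x, y} | x y. x \<in> W \<and> y \<in> W \<and> x \<noteq> y}"

lemma nbhW: "z \<in> VG - W \<Longrightarrow> nbh VG EG (cmp EG (VG - W) z) \<subseteq> W"
proof
  fix y assume z: "z \<in> VG - W" and y: "y \<in> nbh VG EG (cmp EG (VG - W) z)"
  then obtain c where c: "c \<in> cmp EG (VG - W) z" "{c, y} \<in> EG" "y \<in> VG" "y \<notin> cmp EG (VG - W) z"
    unfolding nbh_def by blast
  have cS: "c \<in> VG - W" using c(1) comp_sub[OF z] by blast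
  show "y \<in> W"
  proof (rule ccontr)
    assume "y \<notin> W"
    hence "y \<in> VG - W" using c(3) by simp
    hence "y \<in> cmp EG (VG - W) z" using comp_step[OF c(1) _ cS c(2)] by simp
    thus False using c(4) by simp
  qed
qed

lemma nbhGW: "A \<subseteq> VG - W \<Longrightarrow> nbh VG GW A \<subseteq> nbh VG EG A"
proof
  fix x assume A: "A \<subseteq> VG - W" and x: "x \<in> nbh VG GW A"
  then obtain c where c: "c \<in> A" "{c, x} \<in> GW" "x \<in> VG" "x \<notin> A" unfolding nbh_def by blast
  have cW: "c \<notin> W" using c(1) A by blast
  have "{c, x} \<in> EG"
  proof (rule ccontr)
    assume "{c, x} \<notin> EG"
    hence "{c, x} \<in> {{x, y} | x y. x \<in> W \<and> y \<in> W \<and> x \<noteq> y}" using c(2) unfolding GW_def by blast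
    then obtain p q where "{c, x} = {p, q}" "p \<in> W" "q \<in> W" by blast
    hence "c \<in> W" by (auto simp: doubleton_eq_iff)
    thus False using cW by simp
  qed
  thus "x \<in> nbh VG EG A" unfolding nbh_def using c by blast
qed

lemma gGW: "graph VG GW"
proof -
  have "finite VG" using gG unfolding graph_def by simp
  moreover have "\<forall>d\<in>GW. \<exists>u v. d = {u, v} \<and> u \<noteq> v \<and> u \<in> VG \<and> v \<in> VG"
  proof
    fix d assume "d \<in> GW"
    thus "\<exists>u v. d = {u, v} \<and> u \<noteq> v \<and> u \<in> VG \<and> v \<in> VG"
      unfolding GW_def using gG W_sub unfolding graph_def by blast
  qed
  ultimately show ?thesis unfolding graph_def by blast
qed

lemma main: "potential_maximal_clique VG EG W"
proof -
  obtain T where T: "minimal_triangulation VG GW T" using exists_min_tri[OF gGW] by blast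
  have gT: "graph VG T" and GWT: "GW \<subseteq> T" and chT: "chordal VG T"
    and minT: "\<forall>F'. GW \<subseteq> F' \<and> F' \<subset> T \<longrightarrow> \<not> chordal VG F'"
    using T unfolding minimal_triangulation_def by auto
  have KW: "\<And>u v. u \<in> W \<Longrightarrow> v \<in> W \<Longrightarrow> u \<noteq> v \<Longrightarrow> {u, v} \<in> T"
    using GWT unfolding GW_def by blast
  have EGT: "EG \<subseteq> T" using GWT unfolding GW_def by blast
  have glueT: "\<And>z c y. z \<in> VG - W \<Longrightarrow> c \<in> cmp EG (VG - W) z \<Longrightarrow> {c, y} \<in> T \<Longrightarrow>
      y \<in> cmp EG (VG - W) z \<union> nbh VG EG (cmp EG (VG - W) z)"
  proof -
    fix z c y assume z: "z \<in> VG - W" and c: "c \<in> cmp EG (VG - W) z" and cy: "{c, y} \<in> T"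
    let ?C = "cmp EG (VG - W) z"
    have CS: "?C \<subseteq> VG - W" by (rule comp_sub[OF z])
    have CV: "?C \<subseteq> VG" using CS by blast
    have NW: "nbh VG GW ?C \<subseteq> W" using nbhGW[OF CS] nbhW[OF z] by blast
    have cl: "\<forall>u\<in>nbh VG GW ?C. \<forall>w\<in>nbh VG GW ?C. u \<noteq> w \<longrightarrow> {u, w} \<in> T"
      using NW KW by (meson subsetD)
    have "y \<in> ?C \<union> nbh VG GW ?C" by (rule glue[OF T CV cl c cy])
    thus "y \<in> ?C \<union> nbh VG EG ?C" using nbhGW[OF CS] by blast
  qed
  have mc: "maximal_clique VG T W"
    unfolding maximal_clique_def
  proof (intro conjI allI impI)
    have "\<forall>u\<in>W. \<forall>v\<in>W. u \<noteq> v \<longrightarrow> {u, v} \<in> T" using KW by simp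
    thus clW: "clique VG T W" unfolding clique_def using W_sub by simp
    fix K' assume K': "clique VG T K' \<and> W \<subseteq> K'"
    have K'V: "K' \<subseteq> VG" and K'c: "\<forall>u\<in>K'. \<forall>v\<in>K'. u \<noteq> v \<longrightarrow> {u, v} \<in> T" and WK: "W \<subseteq> K'"
      using K' unfolding clique_def by simp_all
    show "K' = W"
    proof (rule ccontr)
      assume "K' \<noteq> W"
      then obtain w where w: "w \<in> K'" "w \<notin> W" using WK by auto
      have wG: "w \<in> VG - W" using w K'V by auto
      let ?A = "cmp EG (VG - W) w"
      have AS: "?A \<subseteq> VG - W" by (rule comp_sub[OF wG])
      have "W \<subseteq> nbh VG EG ?A"
      proof
        fix y assume y: "y \<in> W"
        have yw: "w \<noteq> y" using y w by auto
        have yK: "y \<in> K'" using y WK by auto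
        have "{w, y} \<in> T" using K'c w(1) yK yw by simp
        hence "y \<in> ?A \<union> nbh VG EG ?A" by (rule glueT[OF wG comp_self])
        moreover have "y \<notin> ?A" using y AS by auto
        ultimately show "y \<in> nbh VG EG ?A" by simp
      qed
      thus False using A1G[OF wG] by simp
    qed
  qed
  have mt: "minimal_triangulation VG EG T"
    unfolding minimal_triangulation_def
  proof (intro conjI allI impI notI)
    show "graph VG T" by (rule gT)
    show "EG \<subseteq> T" by (rule EGT)
    show "chordal VG T" by (rule chT)
    fix F' assume F': "EG \<subseteq> F' \<and> F' \<subset> T" and chF': "chordal VG F'"
    have F'T: "F' \<subseteq> T" using F' by blast
    have allW: "\<And>u v. u \<in> W \<Longrightarrow> v \<in> W \<Longrightarrow> u \<noteq> v \<Longrightarrow> {u, v} \<in> F'"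
    proof (rule ccontr)
      fix u v assume u: "u \<in> W" and v: "v \<in> W" and uv: "u \<noteq> v" and nF: "{u, v} \<notin> F'"
      have nE: "{u, v} \<notin> EG" using nF F' by blast
      obtain z where z: "z \<in> VG - W" "u \<in> nbh VG EG (cmp EG (VG - W) z)" "v \<in> nbh VG EG (cmp EG (VG - W) z)"
        using A2G[OF u v uv nE] by blast
      define A where "A = cmp EG (VG - W) z"
      define S where "S = nbh VG EG A"
      have AS: "A \<subseteq> VG - W" unfolding A_def by (rule comp_sub[OF z(1)])
      have SW: "S \<subseteq> W" unfolding S_def A_def by (rule nbhW[OF z(1)])
      have uvS: "u \<in> S" "v \<in> S" using z unfolding S_def A_def by auto
      obtain y where y: "y \<in> W" "y \<notin> S" using A1G[OF z(1)] unfolding S_def A_def by blast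
      have yS: "y \<in> VG - S" using y W_sub by auto
      define B where "B = cmp EG (VG - S) y"
      have BS: "B \<subseteq> VG - S" unfolding B_def by (rule comp_sub[OF yS])
      have WS: "VG - W \<subseteq> VG - S" using SW by auto
      have AB: "A \<inter> B = {}"
      proof (rule ccontr)
        assume "A \<inter> B \<noteq> {}"
        then obtain x where x: "x \<in> A" "x \<in> B" by auto
        have "(y, x) \<in> (rel EG (VG - S))\<^sup>*" using x(2) unfolding B_def cmp_def by simp
        hence "(x, y) \<in> (rel EG (VG - S))\<^sup>*" by (rule reach_sym)
        moreover have "\<And>w w'. w \<in> A \<Longrightarrow> w' \<in> VG - S \<Longrightarrow> {w, w'} \<in> EG \<Longrightarrow> w' \<in> A"
        proof (rule ccontr)
          fix w w' assume "w \<in> A" "w' \<in> VG - S" "{w, w'} \<in> EG" "w' \<notin> A"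
          hence "w' \<in> S" unfolding S_def nbh_def by auto
          thus False using \<open>w' \<in> VG - S\<close> by blast
        qed
        ultimately have "y \<in> A" using reach_closed[of x y EG "VG - S" A] x(1) by blast
        thus False using AS y by blast
      qed
      have nbB: "\<And>x. x \<in> S \<Longrightarrow> x \<in> nbh VG EG B"
      proof -
        fix x assume xS: "x \<in> S"
        have xW: "x \<in> W" using xS SW by blast
        have xG: "x \<in> VG" using xW W_sub by blast
        have xB: "x \<notin> B" using xS BS by blast
        have yB: "y \<in> B" unfolding B_def by (rule comp_self)
        show "x \<in> nbh VG EG B"
        proof (cases "{y, x} \<in> EG")
          case True thus ?thesis unfolding nbh_def using xG xB yB by blast
        next
          case False
          have xy: "x \<noteq> y" using xS y by blast
          have nxy: "{x, y} \<notin> EG" using False by (simp add: insert_commute)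
          obtain z' where z': "z' \<in> VG - W" "x \<in> nbh VG EG (cmp EG (VG - W) z')"
              "y \<in> nbh VG EG (cmp EG (VG - W) z')"
            using A2G[OF xW y(1) xy nxy] by blast
          let ?A' = "cmp EG (VG - W) z'"
          have A'S: "?A' \<subseteq> VG - S" using comp_sub[OF z'(1)] WS by blast
          obtain c where c: "c \<in> ?A'" "{c, y} \<in> EG" using z'(3) unfolding nbh_def by blast
          obtain c' where c': "c' \<in> ?A'" "{c', x} \<in> EG" using z'(2) unfolding nbh_def by blast
          have "(y, c) \<in> rel EG (VG - S)" using c yS A'S unfolding rel_def by (auto simp: insert_commute)
          moreover have "(c, c') \<in> (rel EG (VG - S))\<^sup>*"
            using comp_conn[OF c(1) c'(1)] rel_mono[OF WS] by blast
          ultimately have "(y, c') \<in> (rel EG (VG - S))\<^sup>*" by (meson converse_rtrancl_into_rtrancl)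
          hence "c' \<in> B" unfolding B_def cmp_def by simp
          thus ?thesis unfolding nbh_def using xG xB c'(2) by blast
        qed
      qed
      have EGF': "EG \<subseteq> F'" using F' by simp
      have noAB: "\<forall>a\<in>A. \<forall>b\<in>B. {a, b} \<notin> F'"
      proof (intro ballI notI)
        fix a b assume a: "a \<in> A" and b: "b \<in> B" and ab: "{a, b} \<in> F'"
        have abT: "{a, b} \<in> T" using ab F'T by (rule subsetD[rotated])
        have a': "a \<in> cmp EG (VG - W) z" using a unfolding A_def .
        have "b \<in> cmp EG (VG - W) z \<union> nbh VG EG (cmp EG (VG - W) z)"
          by (rule glueT[OF z(1) a' abT])
        hence "b \<in> A \<union> S" unfolding A_def S_def .
        moreover have "b \<notin> S" using b BS by auto
        moreover have "b \<notin> A" using b AB by auto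
        ultimately show False by simp
      qed
      obtain cu where cu: "cu \<in> A" "{cu, u} \<in> EG" using uvS(1) unfolding S_def nbh_def by auto
      obtain cv where cv: "cv \<in> A" "{cv, v} \<in> EG" using uvS(2) unfolding S_def nbh_def by auto
      have "(cu, cv) \<in> (rel EG A)\<^sup>*" using comp_conn_in[OF cu(1)[unfolded A_def] cv(1)[unfolded A_def]]
        unfolding A_def .
      from reach_walk[OF this cu(1)] obtain ws where ws: "walk EG A ws" "hd ws = cu" "last ws = cv"
        by blast
      have sub1: "A \<subseteq> A \<union> {u, v}" by auto
      have wsF: "walk F' (A \<union> {u, v}) ws" by (rule walk_mono2[OF ws(1) EGF' sub1])
      have e1: "{u, hd ws} \<in> F'" using cu(2) ws(2) EGF' by (auto simp: insert_commute)
      have e2: "{last ws, v} \<in> F'" using cv(2) ws(3) EGF' by auto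
      have xsw: "walk F' (A \<union> {u, v}) (u # ws @ [v])"
        by (rule walk_wrap[OF wsF _ _ e1 e2]) simp_all
      obtain du where du: "du \<in> B" "{du, u} \<in> EG" using nbB[OF uvS(1)] unfolding nbh_def by auto
      obtain dv where dv: "dv \<in> B" "{dv, v} \<in> EG" using nbB[OF uvS(2)] unfolding nbh_def by auto
      have "(dv, du) \<in> (rel EG B)\<^sup>*" using comp_conn_in[OF dv(1)[unfolded B_def] du(1)[unfolded B_def]]
        unfolding B_def .
      from reach_walk[OF this dv(1)] obtain ws' where ws': "walk EG B ws'" "hd ws' = dv" "last ws' = du"
        by blast
      have sub2: "B \<subseteq> B \<union> {u, v}" by auto
      have wsF': "walk F' (B \<union> {u, v}) ws'" by (rule walk_mono2[OF ws'(1) EGF' sub2])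
      have e3: "{v, hd ws'} \<in> F'" using dv(2) ws'(2) EGF' by (auto simp: insert_commute)
      have e4: "{last ws', u} \<in> F'" using du(2) ws'(3) EGF' by auto
      have ysw: "walk F' (B \<union> {u, v}) (v # ws' @ [u])"
        by (rule walk_wrap[OF wsF' _ _ e3 e4]) simp_all
      show False
      proof (rule two_paths[OF chF' uv nF AB _ _ _ _ noAB _ _ _ _ xsw _ _ ysw])
        show "u \<notin> A" "v \<notin> A" using u v AS by auto
        show "u \<notin> B" "v \<notin> B" using uvS BS by auto
        show "A \<subseteq> VG" "B \<subseteq> VG" using AS BS by auto
        show "u \<in> VG" "v \<in> VG" using u v W_sub by auto
        show "hd (u # ws @ [v]) = u" "last (u # ws @ [v]) = v" by simp_all
        show "hd (v # ws' @ [u]) = v" "last (v # ws' @ [u]) = u" by simp_all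
      qed
    qed
    have "GW \<subseteq> F'" unfolding GW_def using F' allW by blast
    thus False using minT F' chF' by blast
  qed
  show ?thesis unfolding potential_maximal_clique_def using mt mc by blast
qed

end

theorem lemma6:
  fixes VG :: "'v set" and EG :: "'v set set"
    and M :: "'v \<Rightarrow> 'a set" and EM :: "'v \<Rightarrow> 'a set set" and \<Omega> :: "'a set"
  assumes "graph VG EG"
    and "\<And>v. v \<in> VG \<Longrightarrow> graph (M v) (EM v)"
    and "\<And>v. v \<in> VG \<Longrightarrow> M v \<noteq> {}"
    and "\<And>v w. v \<in> VG \<Longrightarrow> w \<in> VG \<Longrightarrow> v \<noteq> w \<Longrightarrow> M v \<inter> M w = {}"
    and "potential_maximal_clique (expansion_vertices VG M) (expansion_edges VG EG M EM) \<Omega>"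
    and "\<Omega> = (\<Union>v\<in>{v \<in> VG. M v \<inter> \<Omega> \<noteq> {}}. M v)"
  shows "potential_maximal_clique VG EG {v \<in> VG. M v \<inter> \<Omega> \<noteq> {}}"
proof -
  interpret exps VG EG M EM \<Omega>
    by unfold_locales (fact assms(1), fact assms(2), fact assms(3), fact assms(4), fact assms(6))
  obtain F where F: "minimal_triangulation (expansion_vertices VG M) (expansion_edges VG EG M EM) F"
      "maximal_clique (expansion_vertices VG M) F \<Omega>"
    using assms(5) unfolding potential_maximal_clique_def by blast
  interpret exF VG EG M EM \<Omega> F by unfold_locales (fact F(1), fact F(2))
  show ?thesis using main unfolding W_def .
qed


end
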